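(* Let $S$ be a monoid. Every Rees artinian right $S$-act has only finitely many maximal (proper) subacts.
   Context: A right $S$-act is Rees artinian if its set of subacts satisfies the descending chain condition. A maximal subact is a proper subact not properly contained in any other proper subact. *)

theory Defs
  imports Main
begin

definition right_act :: "'a set \<Rightarrow> ('a \<Rightarrow> 's::monoid_mult \<Rightarrow> 'a) \<Rightarrow> bool" where
  "right_act A act \<longleftrightarrow>
     (\<forall>a\<in>A. \<forall>s. act a s \<in> A) \<and>
     (\<forall>a\<in>A. act a 1 = a) \<and>
     (\<forall>a\<in>A. \<forall>s t. act (act a s) t = act a (s * t))"

definition subact :: "'a set \<Rightarrow> ('a \<Rightarrow> 's::monoid_mult \<Rightarrow> 'a) \<Rightarrow> 'a set \<Rightarrow> bool" where
  "subact A act B \<longleftrightarrow> B \<subseteq> A \<and> (\<forall>b\<in>B. \<forall>s. act b s \<in> B)"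

definition rees_artinian :: "'a set \<Rightarrow> ('a \<Rightarrow> 's::monoid_mult \<Rightarrow> 'a) \<Rightarrow> bool" where
  "rees_artinian A act \<longleftrightarrow>
     (\<forall>f :: nat \<Rightarrow> 'a set. (\<forall>n. subact A act (f n)) \<and> (\<forall>n. f (Suc n) \<subseteq> f n)
        \<longrightarrow> (\<exists>N. \<forall>n\<ge>N. f n = f N))"

definition maximal_subact :: "'a set \<Rightarrow> ('a \<Rightarrow> 's::monoid_mult \<Rightarrow> 'a) \<Rightarrow> 'a set \<Rightarrow> bool" where
  "maximal_subact A act B \<longleftrightarrow>
     subact A act B \<and> B \<noteq> A \<and>
     \<not> (\<exists>C. subact A act C \<and> C \<noteq> A \<and> B \<subset> C)"

end

theory Submission
  imports Defs
begin

lemma max_union: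
  assumes "maximal_subact A act M" "maximal_subact A act M'" "M \<noteq> M'"
  shows "M \<union> M' = A"
proof -
  have m1: "subact A act M" "M \<noteq> A" "\<And>C. subact A act C \<Longrightarrow> C \<noteq> A \<Longrightarrow> \<not> M \<subset> C"
    using assms(1) unfolding maximal_subact_def by auto
  have m2: "subact A act M'" "M' \<noteq> A" "\<And>C. subact A act C \<Longrightarrow> C \<noteq> A \<Longrightarrow> \<not> M' \<subset> C"
    using assms(2) unfolding maximal_subact_def by auto
  have nsub: "\<not> M' \<subseteq> M"
  proof
    assume "M' \<subseteq> M"
    hence "M' \<subset> M" using assms(3) by auto
    thus False using m2(3)[OF m1(1) m1(2)] by simp
  qed
  have u: "subact A act (M \<union> M')" using m1(1) m2(1) unfolding subact_def by auto
  have ps: "M \<subset> M \<union> M'" using nsub by auto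
  show ?thesis
  proof (rule ccontr)
    assume "M \<union> M' \<noteq> A"
    from m1(3)[OF u this] ps show False by (rule notE)
  qed
qed

theorem mainTheorem9:
  fixes A :: "'a set" and act :: "'a \<Rightarrow> 's::monoid_mult \<Rightarrow> 'a"
  assumes "right_act A act"
    and "rees_artinian A act"
  shows "finite {B. maximal_subact A act B}"
proof (rule ccontr)
  assume "infinite {B. maximal_subact A act B}"
  then obtain g :: "nat \<Rightarrow> 'a set" where g: "inj g" "range g \<subseteq> {B. maximal_subact A act B}"
    using infinite_countable_subset by blast
  have gm: "maximal_subact A act (g i)" for i using g(2) by auto
  define f where "f n = (\<Inter>i\<le>n. g i)" for n
  have "subact A act (f n)" for n
  proof -
    have s: "subact A act (g i)" for i using gm[of i] unfolding maximal_subact_def by simp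
    show ?thesis unfolding subact_def
    proof (intro conjI ballI allI)
      show "f n \<subseteq> A" using s[of 0] unfolding f_def subact_def by auto
    next
      fix b s' assume "b \<in> f n"
      thus "act b s' \<in> f n" using s unfolding f_def subact_def by auto
    qed
  qed
  moreover have "f (Suc n) \<subseteq> f n" for n unfolding f_def by auto
  ultimately have c: "(\<forall>n. subact A act (f n)) \<and> (\<forall>n. f (Suc n) \<subseteq> f n)" by (intro conjI allI)
  have "\<exists>N. \<forall>n\<ge>N. f n = f N"
    by (rule mp[OF spec[OF assms(2)[unfolded rees_artinian_def], of f] c])
  then obtain N where N: "\<forall>n\<ge>N. f n = f N" by (elim exE)
  have e: "f (Suc N) = f N" by (rule N[rule_format]) simp
  have sub: "f N \<subseteq> g (Suc N)"
  proof
    fix x assume "x \<in> f N"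
    hence "x \<in> f (Suc N)" using e by simp
    thus "x \<in> g (Suc N)" unfolding f_def by simp
  qed
  have gs: "subact A act (g (Suc N))" "g (Suc N) \<noteq> A"
    using gm[of "Suc N"] unfolding maximal_subact_def by simp_all
  hence "\<exists>a. a \<in> A \<and> a \<notin> g (Suc N)" unfolding subact_def by auto
  then obtain a where a: "a \<in> A" "a \<notin> g (Suc N)" by (elim exE conjE)
  have ai: "a \<in> g i" if "i \<le> N" for i
  proof -
    have "i \<noteq> Suc N" using that by simp
    hence "g i \<noteq> g (Suc N)" using g(1) by (simp add: inj_eq)
    hence "g i \<union> g (Suc N) = A" by (rule max_union[OF gm gm])
    thus ?thesis using a by auto
  qed
  have "a \<in> f N" unfolding f_def using ai by simp
  thus False using sub a by auto
qed

end
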